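(* Let $\mathcal F$ be a proper filter on $\omega$. The game $\mathfrak G(\mathrm{Fr},[\omega]^{<\omega},\mathcal F^* )$ is equivalent to $\mathfrak G(\mathrm{Fr},\omega,\mathcal F^* )$ (a player has a winning strategy in one iff the same player has one in the other). Consequently the game $\mathfrak G(\mathrm{Fr},[\omega]^{<\omega},\mathcal F^* )$ is determined, and player I has a winning strategy iff $\mathcal F=\mathrm{Fr}$ iff player II has no winning strategy.
   Context: A filter on $\omega$ is a family $\mathcal F\subseteq\mathcal P(\omega)$ closed under finite intersections and supersets and containing all cofinite sets; it is proper if all its members are infinite. $\mathcal F^+=\{X:\omega\setminus X\notin\mathcal F\}$, $\mathcal F^*=\mathcal P(\omega)\setminus\mathcal F^+$. $\mathrm{Fr}$ is the family of cofinite subsets of $\omega$. Game $\mathfrak G(\mathcal X,\omega,\mathcal Z)$: at each stage $k$, I chooses $X_k\in\mathcal X$ and II responds with $n_k\in X_k$; II wins if $\{n_k:k\in\omega\}\in\mathcal Z$. Game $\mathfrak G(\mathcal X,[\omega]^{<\omega},\mathcal Z)$: at each stage $k$, I chooses $X_k\in\mathcal X$ and II responds with a nonempty finite $s_k\subseteq X_k$; II wins if $\bigcup_k s_k\in\mathcal Z$. In each game, I wins when II does not. *)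

theory Defs
  imports Main
begin

definition Fr :: "nat set set" where
  "Fr = {X. finite (- X)}"

definition is_filter :: "nat set set \<Rightarrow> bool" where
  "is_filter F \<longleftrightarrow>
     (\<forall>A B. A \<in> F \<longrightarrow> B \<in> F \<longrightarrow> A \<inter> B \<in> F) \<and>
     (\<forall>A B. A \<in> F \<longrightarrow> A \<subseteq> B \<longrightarrow> B \<in> F) \<and>
     Fr \<subseteq> F"

definition proper_filter :: "nat set set \<Rightarrow> bool" where
  "proper_filter F \<longleftrightarrow> is_filter F \<and> (\<forall>A\<in>F. infinite A)"

definition F_plus :: "nat set set \<Rightarrow> nat set set" where
  "F_plus F = {X. - X \<notin> F}"

definition F_star :: "nat set set \<Rightarrow> nat set set" where
  "F_star F = UNIV - F_plus F"

text \<open>Generic game: player I plays sets from XX, player II answers with a move of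
  type 'b legal w.r.t. I's last set; II wins iff payoff of II's moves lies in Z.
  A strategy for I maps the list of II's previous moves to I's next set;
  a strategy for II maps the list of I's moves so far (ending with the current one)
  to II's answer.\<close>

definition I_has_ws ::
  "nat set set \<Rightarrow> (nat set \<Rightarrow> 'b \<Rightarrow> bool) \<Rightarrow> ((nat \<Rightarrow> 'b) \<Rightarrow> nat set) \<Rightarrow> nat set set \<Rightarrow> bool" where
  "I_has_ws XX legal payoff Z \<longleftrightarrow>
     (\<exists>\<sigma> :: 'b list \<Rightarrow> nat set.
        (\<forall>h. \<sigma> h \<in> XX) \<and>
        (\<forall>b :: nat \<Rightarrow> 'b. (\<forall>k. legal (\<sigma> (map b [0..<k])) (b k)) \<longrightarrow> payoff b \<notin> Z))"

definition II_has_ws ::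
  "nat set set \<Rightarrow> (nat set \<Rightarrow> 'b \<Rightarrow> bool) \<Rightarrow> ((nat \<Rightarrow> 'b) \<Rightarrow> nat set) \<Rightarrow> nat set set \<Rightarrow> bool" where
  "II_has_ws XX legal payoff Z \<longleftrightarrow>
     (\<exists>\<tau> :: nat set list \<Rightarrow> 'b.
        (\<forall>xs. xs \<noteq> [] \<longrightarrow> set xs \<subseteq> XX \<longrightarrow> legal (last xs) (\<tau> xs)) \<and>
        (\<forall>X :: nat \<Rightarrow> nat set. (\<forall>k. X k \<in> XX) \<longrightarrow>
            payoff (\<lambda>k. \<tau> (map X [0..<Suc k])) \<in> Z))"

text \<open>The game G(XX, omega, Z): II answers with n in X_k; outcome {n_k}.\<close>
definition legal_pt :: "nat set \<Rightarrow> nat \<Rightarrow> bool" where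
  "legal_pt X n \<longleftrightarrow> n \<in> X"
definition payoff_pt :: "(nat \<Rightarrow> nat) \<Rightarrow> nat set" where
  "payoff_pt b = range b"

text \<open>The game G(XX, [omega]^<omega, Z): II answers with nonempty finite s subset X_k;
  outcome the union of the s_k.\<close>
definition legal_fin :: "nat set \<Rightarrow> nat set \<Rightarrow> bool" where
  "legal_fin X s \<longleftrightarrow> s \<noteq> {} \<and> finite s \<and> s \<subseteq> X"
definition payoff_fin :: "(nat \<Rightarrow> nat set) \<Rightarrow> nat set" where
  "payoff_fin b = \<Union> (range b)"

abbreviation I_wins_pt where "I_wins_pt XX Z \<equiv> I_has_ws XX legal_pt payoff_pt Z"
abbreviation II_wins_pt where "II_wins_pt XX Z \<equiv> II_has_ws XX legal_pt payoff_pt Z"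
abbreviation I_wins_fin where "I_wins_fin XX Z \<equiv> I_has_ws XX legal_fin payoff_fin Z"
abbreviation II_wins_fin where "II_wins_fin XX Z \<equiv> II_has_ws XX legal_fin payoff_fin Z"

end

theory Submission
  imports Defs
begin

lemma seq_exists: "\<exists>b::nat\<Rightarrow>'b. \<forall>k. b k = c (map b [0..<k])"
proof -
  define L where "L = rec_nat [] (\<lambda>k l. l @ [c l])"
  define b where "b k = c (L k)" for k
  have "map b [0..<k] = L k" for k
    by (induction k) (simp_all add: L_def b_def)
  then have "\<forall>k. b k = c (map b [0..<k])" by (simp add: b_def)
  then show ?thesis by blast
qed

lemma Fstar_iff: "X \<in> F_star F \<longleftrightarrow> - X \<in> F"
  by (simp add: F_star_def F_plus_def)

lemma pick: assumes "S \<in> Fr" "infinite B" shows "\<exists>n. n \<in> S \<and> n \<in> B"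
proof -
  have "finite (- S)" using assms(1) by (simp add: Fr_def)
  then have "infinite (B - (- S))" using assms(2) by (rule Diff_infinite_finite)
  then have "B - (- S) \<noteq> {}" by (metis finite.emptyI)
  then show ?thesis by blast
qed

lemma inf_unb: assumes "\<And>k. \<exists>n\<in>S. k \<le> n" shows "infinite (S::nat set)"
proof
  assume "finite S"
  then obtain m where m: "\<forall>n\<in>S. n \<le> m" unfolding finite_nat_set_iff_bounded_le by blast
  obtain n where "n \<in> S" "Suc m \<le> n" using assms[of "Suc m"] by blast
  with m show False by fastforce
qed

lemma atLeast_Fr: "{k..} \<in> Fr"
  by (simp add: Fr_def Compl_atLeast)

lemma caseFr:
  assumes "F = Fr"
  shows "I_wins_fin Fr (F_star F) \<and> I_wins_pt Fr (F_star F) \<and>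
         \<not> II_wins_fin Fr (F_star F) \<and> \<not> II_wins_pt Fr (F_star F)"
proof -
  have FS: "X \<in> F_star F \<longleftrightarrow> finite X" for X
    using assms by (simp add: Fstar_iff Fr_def)
  have A: "I_wins_fin Fr (F_star F)"
    unfolding I_has_ws_def
  proof (intro exI[of _ "\<lambda>h. {length h..}"] conjI allI impI)
    fix h :: "nat set list" show "{length h..} \<in> Fr" by (rule atLeast_Fr)
  next
    fix b :: "nat \<Rightarrow> nat set"
    assume "\<forall>k. legal_fin {length (map b [0..<k])..} (b k)"
    then have h: "\<And>k. b k \<noteq> {} \<and> b k \<subseteq> {k..}" by (simp add: legal_fin_def)
    have "infinite (payoff_fin b)"
    proof (rule inf_unb)
      fix k obtain n where "n \<in> b k" using h[of k] by blast
      then show "\<exists>n\<in>payoff_fin b. k \<le> n" using h[of k] unfolding payoff_fin_def by blast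
    qed
    then show "payoff_fin b \<notin> F_star F" using FS by simp
  qed
  have B: "I_wins_pt Fr (F_star F)"
    unfolding I_has_ws_def
  proof (intro exI[of _ "\<lambda>h. {length h..}"] conjI allI impI)
    fix h :: "nat list" show "{length h..} \<in> Fr" by (rule atLeast_Fr)
  next
    fix b :: "nat \<Rightarrow> nat"
    assume "\<forall>k. legal_pt {length (map b [0..<k])..} (b k)"
    then have h: "\<And>k. k \<le> b k" by (simp add: legal_pt_def)
    have "infinite (payoff_pt b)"
      by (rule inf_unb) (use h in \<open>auto simp: payoff_pt_def\<close>)
    then show "payoff_pt b \<notin> F_star F" using FS by simp
  qed
  have C: "\<not> II_wins_fin Fr (F_star F)"
  proof
    assume "II_wins_fin Fr (F_star F)"
    then obtain \<tau> :: "nat set list \<Rightarrow> nat set" where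
      t1: "\<forall>xs. xs \<noteq> [] \<longrightarrow> set xs \<subseteq> Fr \<longrightarrow> legal_fin (last xs) (\<tau> xs)" and
      t2: "\<forall>X. (\<forall>k. X k \<in> Fr) \<longrightarrow> payoff_fin (\<lambda>k. \<tau> (map X [0..<Suc k])) \<in> F_star F"
      unfolding II_has_ws_def by blast
    define X where "X k = {k..}" for k :: nat
    have XF: "\<forall>k. X k \<in> Fr" by (simp add: X_def atLeast_Fr)
    have h: "\<tau> (map X [0..<Suc k]) \<noteq> {} \<and> \<tau> (map X [0..<Suc k]) \<subseteq> {k..}" for k
      using t1[rule_format, of "map X [0..<Suc k]"] XF by (auto simp: legal_fin_def X_def)
    have "infinite (payoff_fin (\<lambda>k. \<tau> (map X [0..<Suc k])))"
    proof (rule inf_unb)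
      fix k obtain n where "n \<in> \<tau> (map X [0..<Suc k])" using h[of k] by blast
      then show "\<exists>n\<in>payoff_fin (\<lambda>k. \<tau> (map X [0..<Suc k])). k \<le> n"
        using h[of k] unfolding payoff_fin_def by blast
    qed
    with t2 XF FS show False by blast
  qed
  have D: "\<not> II_wins_pt Fr (F_star F)"
  proof
    assume "II_wins_pt Fr (F_star F)"
    then obtain \<tau> :: "nat set list \<Rightarrow> nat" where
      t1: "\<forall>xs. xs \<noteq> [] \<longrightarrow> set xs \<subseteq> Fr \<longrightarrow> legal_pt (last xs) (\<tau> xs)" and
      t2: "\<forall>X. (\<forall>k. X k \<in> Fr) \<longrightarrow> payoff_pt (\<lambda>k. \<tau> (map X [0..<Suc k])) \<in> F_star F"
      unfolding II_has_ws_def by blast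
    define X where "X k = {k..}" for k :: nat
    have XF: "\<forall>k. X k \<in> Fr" by (simp add: X_def atLeast_Fr)
    have h: "k \<le> \<tau> (map X [0..<Suc k])" for k
      using t1[rule_format, of "map X [0..<Suc k]"] XF by (auto simp: legal_pt_def X_def)
    have "infinite (payoff_pt (\<lambda>k. \<tau> (map X [0..<Suc k])))"
      by (rule inf_unb) (use h in \<open>auto simp: payoff_pt_def\<close>)
    with t2 XF FS show False by blast
  qed
  show ?thesis using A B C D by blast
qed

lemma caseNFr:
  assumes "is_filter F" "F \<noteq> Fr"
  shows "\<not> I_wins_fin Fr (F_star F) \<and> \<not> I_wins_pt Fr (F_star F) \<and>
         II_wins_fin Fr (F_star F) \<and> II_wins_pt Fr (F_star F)"
proof -
  have "Fr \<subseteq> F" and up: "\<And>A B. A \<in> F \<Longrightarrow> A \<subseteq> B \<Longrightarrow> B \<in> F"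
    using assms(1) by (auto simp: is_filter_def)
  then obtain A where AF: "A \<in> F" and "A \<notin> Fr" using assms(2) by blast
  then have infA: "infinite (- A)" by (simp add: Fr_def)
  have pk: "S \<in> Fr \<Longrightarrow> (SOME n. n \<in> S \<and> n \<in> - A) \<in> S \<and> (SOME n. n \<in> S \<and> n \<in> - A) \<in> - A" for S
    using someI_ex[OF pick[OF _ infA, of S]] by (simp only:)
  have win: "Y \<subseteq> - A \<Longrightarrow> Y \<in> F_star F" for Y
    using up[OF AF, of "- Y"] by (auto simp add: Fstar_iff)
  have A1: "\<not> I_wins_fin Fr (F_star F)"
  proof
    assume "I_wins_fin Fr (F_star F)"
    then obtain \<sigma> :: "nat set list \<Rightarrow> nat set" where s1: "\<forall>h. \<sigma> h \<in> Fr" and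
      s2: "\<forall>b. (\<forall>k. legal_fin (\<sigma> (map b [0..<k])) (b k)) \<longrightarrow> payoff_fin b \<notin> F_star F"
      unfolding I_has_ws_def by blast
    obtain b :: "nat \<Rightarrow> nat set" where
      b: "\<forall>k. b k = (\<lambda>h. {SOME n. n \<in> \<sigma> h \<and> n \<in> - A}) (map b [0..<k])"
      using seq_exists[of "\<lambda>h. {SOME n. n \<in> \<sigma> h \<and> n \<in> - A}"] by (rule exE)
    have bk: "b k = {SOME n. n \<in> \<sigma> (map b [0..<k]) \<and> n \<in> - A}" for k
      using b[rule_format, of k] by (simp only:)
    have L: "legal_fin (\<sigma> (map b [0..<k])) (b k)" for k
      unfolding bk[of k] legal_fin_def using pk[OF s1[rule_format]] by blast
    have "b k \<subseteq> - A" for k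
      unfolding bk[of k] using pk[OF s1[rule_format]] by blast
    then have "payoff_fin b \<subseteq> - A"
      unfolding payoff_fin_def by blast
    then have "payoff_fin b \<in> F_star F" by (rule win)
    moreover have "payoff_fin b \<notin> F_star F" using s2[rule_format, OF L] .
    ultimately show False by (simp only: notE)
  qed
  have A2: "\<not> I_wins_pt Fr (F_star F)"
  proof
    assume "I_wins_pt Fr (F_star F)"
    then obtain \<sigma> :: "nat list \<Rightarrow> nat set" where s1: "\<forall>h. \<sigma> h \<in> Fr" and
      s2: "\<forall>b. (\<forall>k. legal_pt (\<sigma> (map b [0..<k])) (b k)) \<longrightarrow> payoff_pt b \<notin> F_star F"
      unfolding I_has_ws_def by blast
    obtain b :: "nat \<Rightarrow> nat" where
      b: "\<forall>k. b k = (\<lambda>h. SOME n. n \<in> \<sigma> h \<and> n \<in> - A) (map b [0..<k])"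
      using seq_exists[of "\<lambda>h. SOME n. n \<in> \<sigma> h \<and> n \<in> - A"] by (rule exE)
    have bk: "b k = (SOME n. n \<in> \<sigma> (map b [0..<k]) \<and> n \<in> - A)" for k
      using b[rule_format, of k] by (simp only:)
    have L: "legal_pt (\<sigma> (map b [0..<k])) (b k)" for k
      unfolding bk[of k] legal_pt_def using pk[OF s1[rule_format]] by blast
    have "b k \<in> - A" for k
      unfolding bk[of k] using pk[OF s1[rule_format]] by blast
    then have "payoff_pt b \<subseteq> - A"
      unfolding payoff_pt_def by blast
    then have "payoff_pt b \<in> F_star F" by (rule win)
    moreover have "payoff_pt b \<notin> F_star F" using s2[rule_format, OF L] .
    ultimately show False by (simp only: notE)
  qed
  have A3: "II_wins_fin Fr (F_star F)"
    unfolding II_has_ws_def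
  proof (intro exI[of _ "\<lambda>xs. {SOME n. n \<in> last xs \<and> n \<in> - A}"] conjI allI impI)
    fix xs :: "nat set list" assume "xs \<noteq> []" "set xs \<subseteq> Fr"
    then have "last xs \<in> Fr" by auto
    then show "legal_fin (last xs) {SOME n. n \<in> last xs \<and> n \<in> - A}"
      using pk by (simp add: legal_fin_def)
  next
    fix X :: "nat \<Rightarrow> nat set" assume "\<forall>k. X k \<in> Fr"
    then show "payoff_fin (\<lambda>k. {SOME n. n \<in> last (map X [0..<Suc k]) \<and> n \<in> - A}) \<in> F_star F"
      using pk by (intro win) (auto simp: payoff_fin_def)
  qed
  have A4: "II_wins_pt Fr (F_star F)"
    unfolding II_has_ws_def
  proof (intro exI[of _ "\<lambda>xs. SOME n. n \<in> last xs \<and> n \<in> - A"] conjI allI impI)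
    fix xs :: "nat set list" assume "xs \<noteq> []" "set xs \<subseteq> Fr"
    then have "last xs \<in> Fr" by auto
    then show "legal_pt (last xs) (SOME n. n \<in> last xs \<and> n \<in> - A)"
      using pk by (simp add: legal_pt_def)
  next
    fix X :: "nat \<Rightarrow> nat set" assume "\<forall>k. X k \<in> Fr"
    then show "payoff_pt (\<lambda>k. SOME n. n \<in> last (map X [0..<Suc k]) \<and> n \<in> - A) \<in> F_star F"
      using pk by (intro win) (auto simp: payoff_pt_def)
  qed
  show ?thesis using A1 A2 A3 A4 by blast
qed

theorem theorem2p14:
  fixes F :: "nat set set"
  assumes "proper_filter F"
  shows "(I_wins_fin Fr (F_star F) \<longleftrightarrow> I_wins_pt Fr (F_star F)) \<and>
         (II_wins_fin Fr (F_star F) \<longleftrightarrow> II_wins_pt Fr (F_star F)) \<and>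
         (I_wins_fin Fr (F_star F) \<or> II_wins_fin Fr (F_star F)) \<and>
         (I_wins_fin Fr (F_star F) \<longleftrightarrow> F = Fr) \<and>
         (F = Fr \<longleftrightarrow> \<not> II_wins_fin Fr (F_star F))"
proof (cases "F = Fr")
  case True
  then show ?thesis using caseFr by blast
next
  case False
  have "is_filter F" using assms by (simp add: proper_filter_def)
  then show ?thesis using caseNFr[of F] False by blast
qed

end
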